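(* There are $\lambda<1$ and $A,B\ge0$ such that for each $f\in L^1_2(\mathbb{R}^d)$ and $m,n\ge1$, $$\|\mathcal{L}_{t,n}^mf\|_{L^1_2}\le A\lambda^m\|f\|_{L^1_2}+B\|f\|_{L^1}.$$
   Context: Consider on $\mathbb{R}^d$ the SDE $dX_t=b(X_t)dt+dW_t$, $X_0=x$, with $W$ a standard Brownian motion, $b$ Lipschitz continuous, and $\langle b(x),x\rangle\le R_1-R_2\|x\|^2$ for constants $R_1\in\mathbb{R}$, $R_2>0$. Fix $t>0$; $S_t(x,y)$ is the transition density and $(\mathcal{L}_tf)(y):=\int S_t(x,y)f(x)\,dx$. Fix $x_0\in\mathbb{R}^d$ and a real sequence $u_n\to+\infty$; $B_n:=B(x_0,e^{-u_n})$ and $(\mathcal{L}_{t,n}f)(x):=1_{B_n^c}(x)(\mathcal{L}_tf)(x)$. $\|f\|_{L^1_2}:=\int(1+|x|^2)|f|\,dx$. *)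

theory Defs
  imports "HOL-Probability.Probability"
begin

definition gauss_density :: "real \<Rightarrow> 'a::euclidean_space \<Rightarrow> real" where
  "gauss_density s z = (2 * pi * s) powr (- real DIM('a) / 2) * exp (- (norm z)\<^sup>2 / (2 * s))"

definition brownian_motion :: "'b measure \<Rightarrow> (real \<Rightarrow> 'b \<Rightarrow> 'a::euclidean_space) \<Rightarrow> bool" where
  "brownian_motion M W \<longleftrightarrow> prob_space M \<and>
     (\<forall>t. W t \<in> borel_measurable M) \<and>
     (\<forall>\<omega>\<in>space M. W 0 \<omega> = 0 \<and> continuous_on {0..} (\<lambda>t. W t \<omega>)) \<and>
     (\<forall>s t. 0 \<le> s \<and> s < t \<longrightarrow>
        distributed M lborel (\<lambda>\<omega>. W t \<omega> - W s \<omega>) (\<lambda>z. ennreal (gauss_density (t - s) z))) \<and>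
     (\<forall>ts :: real list. sorted ts \<and> (\<forall>s\<in>set ts. 0 \<le> s) \<longrightarrow>
        prob_space.indep_vars M (\<lambda>_. borel) (\<lambda>i \<omega>. W (ts ! Suc i) \<omega> - W (ts ! i) \<omega>) {..<length ts - 1})"

text \<open>X solves dX = b(X) dt + dW, X_0 = x (pathwise integral form; the noise is additive).\<close>
definition sde_solution :: "'b measure \<Rightarrow> (real \<Rightarrow> 'b \<Rightarrow> 'a::euclidean_space) \<Rightarrow> ('a \<Rightarrow> 'a) \<Rightarrow> 'a
    \<Rightarrow> (real \<Rightarrow> 'b \<Rightarrow> 'a) \<Rightarrow> bool" where
  "sde_solution M W b x X \<longleftrightarrow>
     (\<forall>\<omega>\<in>space M. continuous_on {0..} (\<lambda>t. X t \<omega>) \<and>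
        (\<forall>t\<ge>0. X t \<omega> = x + integral {0..t} (\<lambda>s. b (X s \<omega>)) + W t \<omega>))"

definition transfer_op :: "('a::euclidean_space \<Rightarrow> 'a \<Rightarrow> real) \<Rightarrow> ('a \<Rightarrow> real) \<Rightarrow> 'a \<Rightarrow> real" where
  "transfer_op S f y = (\<integral>x. S x y * f x \<partial>lborel)"

definition open_op :: "('a::euclidean_space \<Rightarrow> 'a \<Rightarrow> real) \<Rightarrow> 'a \<Rightarrow> (nat \<Rightarrow> real) \<Rightarrow> nat
    \<Rightarrow> ('a \<Rightarrow> real) \<Rightarrow> 'a \<Rightarrow> real" where
  "open_op S x0 u n f x = indicator (- ball x0 (exp (- u n))) x * transfer_op S f x"

definition L12_norm :: "('a::euclidean_space \<Rightarrow> real) \<Rightarrow> ennreal" where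
  "L12_norm f = (\<integral>\<^sup>+x. ennreal ((1 + (norm x)\<^sup>2) * \<bar>f x\<bar>) \<partial>lborel)"

definition L1_norm :: "('a::euclidean_space \<Rightarrow> real) \<Rightarrow> ennreal" where
  "L1_norm f = (\<integral>\<^sup>+x. ennreal \<bar>f x\<bar> \<partial>lborel)"

end

theory Submission
  imports Defs
begin


definition Top :: "('a::euclidean_space \<Rightarrow> 'a \<Rightarrow> real) \<Rightarrow> ('a \<Rightarrow> ennreal) \<Rightarrow> 'a \<Rightarrow> ennreal" where
  "Top S h y = (\<integral>\<^sup>+x. ennreal (S x y) * h x \<partial>lborel)"

lemma meas_pair_lborel:
  fixes g :: "'a::euclidean_space \<times> 'a \<Rightarrow> real"
  assumes "g \<in> borel_measurable borel"
  shows "g \<in> borel_measurable (lborel \<Otimes>\<^sub>M lborel)"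
proof -
  have "sets (lborel \<Otimes>\<^sub>M lborel) = sets (borel \<Otimes>\<^sub>M borel :: ('a \<times> 'a) measure)"
    by (intro sets_pair_measure_cong) auto
  also have "\<dots> = sets (borel :: ('a \<times> 'a) measure)" using borel_prod by metis
  finally show ?thesis using assms measurable_cong_sets by blast
qed

lemma meas_Top:
  fixes S :: "'a::euclidean_space \<Rightarrow> 'a \<Rightarrow> real"
  assumes S: "(\<lambda>(x, y). S x y) \<in> borel_measurable borel" and h: "h \<in> borel_measurable lborel"
  shows "Top S h \<in> borel_measurable lborel"
proof -
  have S': "(\<lambda>(x, y). S x y) \<in> borel_measurable (lborel \<Otimes>\<^sub>M lborel)"
    using meas_pair_lborel[OF S] .
  have "(\<lambda>p. S (snd p) (fst p)) \<in> borel_measurable (lborel \<Otimes>\<^sub>M lborel)"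
    using measurable_compose[OF measurable_pair_swap' S'] by (simp add: case_prod_beta)
  hence "case_prod (\<lambda>y x. ennreal (S x y) * h x) \<in> borel_measurable (lborel \<Otimes>\<^sub>M lborel)"
    using h by (simp add: case_prod_beta) measurable
  thus ?thesis unfolding Top_def[abs_def] by (rule lborel.borel_measurable_nn_integral)
qed

lemma Top_swap:
  fixes S :: "'a::euclidean_space \<Rightarrow> 'a \<Rightarrow> real"
  assumes S: "(\<lambda>(x, y). S x y) \<in> borel_measurable borel" and h: "h \<in> borel_measurable lborel"
    and V: "V \<in> borel_measurable lborel"
  shows "(\<integral>\<^sup>+y. V y * Top S h y \<partial>lborel) = (\<integral>\<^sup>+x. h x * (\<integral>\<^sup>+y. ennreal (S x y) * V y \<partial>lborel) \<partial>lborel)"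
proof -
  have S': "(\<lambda>(x, y). S x y) \<in> borel_measurable (lborel \<Otimes>\<^sub>M lborel)"
    using meas_pair_lborel[OF S] .
  have S'': "(\<lambda>p. S (fst p) (snd p)) \<in> borel_measurable (lborel \<Otimes>\<^sub>M lborel)"
    using S' by (simp add: case_prod_beta)
  have m: "case_prod (\<lambda>x y. V y * (ennreal (S x y) * h x)) \<in> borel_measurable (lborel \<Otimes>\<^sub>M lborel)"
    using S'' h V by (simp add: case_prod_beta) measurable
  have Sy: "(\<lambda>x. S x y) \<in> borel_measurable lborel" for y
    using measurable_compose[OF measurable_Pair[OF measurable_ident_sets[OF refl] measurable_const[of y]] S'']
    by simp
  have Sx: "(\<lambda>y. S x y) \<in> borel_measurable lborel" for x
    using measurable_compose[OF measurable_Pair[OF measurable_const[of x] measurable_ident_sets[OF refl]] S'']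
    by simp
  have "(\<integral>\<^sup>+y. V y * Top S h y \<partial>lborel) = (\<integral>\<^sup>+y. (\<integral>\<^sup>+x. V y * (ennreal (S x y) * h x) \<partial>lborel) \<partial>lborel)"
    unfolding Top_def
    apply (rule nn_integral_cong)
    apply (rule nn_integral_cmult[symmetric])
    using Sy h by measurable
  also have "\<dots> = (\<integral>\<^sup>+x. (\<integral>\<^sup>+y. V y * (ennreal (S x y) * h x) \<partial>lborel) \<partial>lborel)"
    by (rule lborel_pair.Fubini'[OF m])
  also have "\<dots> = (\<integral>\<^sup>+x. h x * (\<integral>\<^sup>+y. ennreal (S x y) * V y \<partial>lborel) \<partial>lborel)"
  proof (rule nn_integral_cong)
    fix x
    have "(\<integral>\<^sup>+y. h x * (ennreal (S x y) * V y) \<partial>lborel) = h x * (\<integral>\<^sup>+y. ennreal (S x y) * V y \<partial>lborel)"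
      apply (rule nn_integral_cmult)
      using Sx V by measurable
    thus "(\<integral>\<^sup>+y. V y * (ennreal (S x y) * h x) \<partial>lborel) = h x * (\<integral>\<^sup>+y. ennreal (S x y) * V y \<partial>lborel)"
      by (simp add: ac_simps)
  qed
  finally show ?thesis .
qed

lemma op_bound:
  fixes S :: "'a::euclidean_space \<Rightarrow> 'a \<Rightarrow> real"
  assumes Sn: "\<forall>x y. S x y \<ge> 0"
  shows "ennreal \<bar>(open_op S x0 u n ^^ k) f y\<bar> \<le> (Top S ^^ k) (\<lambda>x. ennreal \<bar>f x\<bar>) y"
proof (induction k arbitrary: y)
  case 0
  then show ?case by simp
next
  case (Suc k)
  define g where "g = (open_op S x0 u n ^^ k) f"
  have "\<bar>open_op S x0 u n g y\<bar> \<le> \<bar>transfer_op S g y\<bar>"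
    unfolding open_op_def by (auto simp: indicator_def)
  hence "ennreal \<bar>open_op S x0 u n g y\<bar> \<le> ennreal \<bar>transfer_op S g y\<bar>"
    by (rule ennreal_leI)
  also have "\<dots> \<le> (\<integral>\<^sup>+x. ennreal (norm (S x y * g x)) \<partial>lborel)"
  proof (cases "integrable lborel (\<lambda>x. S x y * g x)")
    case True
    then show ?thesis unfolding transfer_op_def
      using integral_norm_bound_ennreal[OF True] by simp
  next
    case False
    then show ?thesis unfolding transfer_op_def by (simp add: not_integrable_integral_eq)
  qed
  also have "\<dots> = (\<integral>\<^sup>+x. ennreal (S x y) * ennreal \<bar>g x\<bar> \<partial>lborel)"
    using Sn by (intro nn_integral_cong) (simp add: abs_mult ennreal_mult)
  also have "\<dots> \<le> (\<integral>\<^sup>+x. ennreal (S x y) * (Top S ^^ k) (\<lambda>x. ennreal \<bar>f x\<bar>) x \<partial>lborel)"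
    by (intro nn_integral_mono mult_left_mono) (auto simp: g_def Suc.IH)
  also have "\<dots> = Top S ((Top S ^^ k) (\<lambda>x. ennreal \<bar>f x\<bar>)) y"
    unfolding Top_def[of S _ y] ..
  finally show ?case by (simp add: g_def)
qed

lemma operator_part:
  fixes S :: "'a::euclidean_space \<Rightarrow> 'a \<Rightarrow> real"
  assumes S_meas: "(\<lambda>(x, y). S x y) \<in> borel_measurable borel"
    and Sn: "\<forall>x y. S x y \<ge> 0"
    and k1: "\<And>x. (\<integral>\<^sup>+y. ennreal (S x y) * 1 \<partial>lborel) \<le> 1"
    and k2: "\<And>x. (\<integral>\<^sup>+y. ennreal (S x y) * ennreal (1 + (norm y)\<^sup>2) \<partial>lborel) \<le> ennreal (a * (1 + (norm x)\<^sup>2)) + ennreal bb"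
    and a: "0 \<le> a" "a < 1" and bb: "0 \<le> bb"
  shows "\<exists>lam A B. 0 \<le> lam \<and> lam < 1 \<and> A \<ge> 0 \<and> B \<ge> 0 \<and>
           (\<forall>f :: 'a \<Rightarrow> real. f \<in> borel_measurable lborel \<and> L12_norm f < \<infinity> \<longrightarrow>
              (\<forall>m n. m \<ge> 1 \<and> n \<ge> 1 \<longrightarrow>
                 L12_norm ((open_op S x0 u n ^^ m) f)
                   \<le> ennreal (A * lam ^ m) * L12_norm f + ennreal B * L1_norm f))"
proof (intro exI conjI allI impI)
  define B where "B = bb / (1 - a)"
  show "0 \<le> a" "a < 1" "(0::real) \<le> 1" "0 \<le> B" using a bb by (auto simp: B_def)
  fix f :: "'a \<Rightarrow> real" and m n :: nat
  assume f: "f \<in> borel_measurable lborel \<and> L12_norm f < \<infinity>" and mn: "1 \<le> m \<and> 1 \<le> n"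
  define h where "h k = (Top S ^^ k) (\<lambda>x. ennreal \<bar>f x\<bar>)" for k
  define V :: "'a \<Rightarrow> ennreal" where "V y = ennreal (1 + (norm y)\<^sup>2)" for y
  have Vm: "V \<in> borel_measurable lborel" unfolding V_def by measurable
  have hm: "h k \<in> borel_measurable lborel" for k
  proof (induction k)
    case 0
    have [measurable]: "f \<in> borel_measurable borel" using f by simp
    show ?case by (simp add: h_def) measurable
  next
    case (Suc k) then show ?case using meas_Top[OF S_meas Suc] by (simp add: h_def)
  qed
  define N where "N = (\<integral>\<^sup>+x. ennreal \<bar>f x\<bar> \<partial>lborel)"
  define I where "I k = (\<integral>\<^sup>+y. V y * h k y \<partial>lborel)" for k
  have hS: "h (Suc k) = Top S (h k)" for k by (simp add: h_def)
  have Nk: "(\<integral>\<^sup>+y. h k y \<partial>lborel) \<le> N" for k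
  proof (induction k)
    case 0 then show ?case by (simp add: h_def N_def)
  next
    case (Suc k)
    have "(\<integral>\<^sup>+y. h (Suc k) y \<partial>lborel) = (\<integral>\<^sup>+y. (\<lambda>_. 1) y * Top S (h k) y \<partial>lborel)"
      by (simp add: hS)
    also have "\<dots> = (\<integral>\<^sup>+x. h k x * (\<integral>\<^sup>+y. ennreal (S x y) * 1 \<partial>lborel) \<partial>lborel)"
      by (rule Top_swap[OF S_meas hm]) simp
    also have "\<dots> \<le> (\<integral>\<^sup>+x. h k x \<partial>lborel)"
      using k1 by (intro nn_integral_mono) (metis mult.right_neutral mult_left_mono zero_le)
    finally show ?case using Suc by simp
  qed
  have Istep: "I (Suc k) \<le> ennreal a * I k + ennreal bb * N" for k
  proof -
    have "I (Suc k) = (\<integral>\<^sup>+x. h k x * (\<integral>\<^sup>+y. ennreal (S x y) * V y \<partial>lborel) \<partial>lborel)"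
      unfolding I_def hS by (rule Top_swap[OF S_meas hm Vm])
    also have "\<dots> \<le> (\<integral>\<^sup>+x. ennreal a * (V x * h k x) + ennreal bb * h k x \<partial>lborel)"
    proof (intro nn_integral_mono)
      fix x
      have "h k x * (\<integral>\<^sup>+y. ennreal (S x y) * V y \<partial>lborel) \<le> h k x * (ennreal (a * (1 + (norm x)\<^sup>2)) + ennreal bb)"
        using k2[of x] unfolding V_def by (intro mult_left_mono) auto
      also have "\<dots> = ennreal a * (V x * h k x) + ennreal bb * h k x"
        using a by (simp add: V_def ennreal_mult distrib_left ac_simps)
      finally show "h k x * (\<integral>\<^sup>+y. ennreal (S x y) * V y \<partial>lborel) \<le> ennreal a * (V x * h k x) + ennreal bb * h k x" .
    qed
    also have "\<dots> = ennreal a * I k + ennreal bb * (\<integral>\<^sup>+x. h k x \<partial>lborel)"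
      unfolding I_def using hm[of k] Vm
      by (subst nn_integral_add) (auto simp: nn_integral_cmult)
    also have "\<dots> \<le> ennreal a * I k + ennreal bb * N"
      using Nk[of k] by (intro add_left_mono mult_left_mono) auto
    finally show ?thesis .
  qed
  have Ibound: "I k \<le> ennreal (a ^ k) * I 0 + ennreal B * N" for k
  proof (induction k)
    case 0 then show ?case by simp
  next
    case (Suc k)
    have "I (Suc k) \<le> ennreal a * (ennreal (a ^ k) * I 0 + ennreal B * N) + ennreal bb * N"
      using Istep[of k] Suc by (meson add_right_mono mult_left_mono order_trans zero_le)
    also have "\<dots> = ennreal (a ^ Suc k) * I 0 + ennreal (a * B + bb) * N"
    proof -
      have B0: "0 \<le> B" using a bb by (simp add: B_def)
      have e1: "ennreal a * (ennreal (a ^ k) * I 0) = ennreal (a ^ Suc k) * I 0"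
        using a by (simp add: mult.assoc[symmetric] ennreal_mult[symmetric])
      have e2: "ennreal (a * B + bb) * N = ennreal a * (ennreal B * N) + ennreal bb * N"
      proof -
        have "ennreal (a * B + bb) = ennreal a * ennreal B + ennreal bb"
          using a bb B0 by (metis ennreal_mult ennreal_plus mult_nonneg_nonneg)
        thus ?thesis by (simp add: distrib_right mult.assoc)
      qed
      show ?thesis by (simp add: distrib_left e1 e2 add.assoc)
    qed
    also have "a * B + bb = B" using a by (simp add: B_def field_simps)
    finally show ?case .
  qed
  have c1: "L12_norm ((open_op S x0 u n ^^ m) f) \<le> I m"
    unfolding L12_norm_def I_def V_def h_def
    apply (intro nn_integral_mono)
    apply (subst ennreal_mult)
      apply simp apply simp
    apply (intro mult_left_mono op_bound[OF Sn]) by simp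
  have c2: "I 0 = L12_norm f"
    unfolding I_def L12_norm_def V_def h_def by (intro nn_integral_cong) (simp add: ennreal_mult)
  have c3: "N = L1_norm f" unfolding N_def L1_norm_def ..
  show "L12_norm ((open_op S x0 u n ^^ m) f) \<le> ennreal (1 * a ^ m) * L12_norm f + ennreal B * L1_norm f"
    using Ibound[of m] c1 c2 c3 by simp
qed



lemma cont_local:
  fixes f :: "real \<Rightarrow> 'a::topological_space"
  assumes "\<And>T. T \<ge> 0 \<Longrightarrow> continuous_on {0..T} f"
  shows "continuous_on {0..} f"
proof -
  have "continuous (at s within {0..}) f" if s: "s \<ge> 0" for s
  proof -
    have "continuous (at s within {0..s+1}) f"
      using assms[of "s+1"] s by (simp add: continuous_on_eq_continuous_within)
    moreover have "at s within {0..s+1} = at s within {0..}"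
      by (rule at_within_nhd[where S="{s - 1 <..< s + 1}"]) auto
    ultimately show ?thesis by simp
  qed
  thus ?thesis by (simp add: continuous_on_eq_continuous_within)
qed

lemma cont_F:
  fixes b :: "'a::euclidean_space \<Rightarrow> 'a" and w Q :: "real \<Rightarrow> 'a"
  assumes b: "continuous_on UNIV b" and w: "continuous_on {0..} w" and Q: "continuous_on {0..} Q"
  shows "continuous_on {0..} (\<lambda>s. x + integral {0..s} (\<lambda>r. b (Q r + w r)))"
proof -
  have g: "continuous_on {0..} (\<lambda>r. b (Q r + w r))"
    by (intro continuous_on_compose2[OF b] continuous_on_add Q w) auto
  have "continuous_on {0..T} (\<lambda>s. integral {0..s} (\<lambda>r. b (Q r + w r)))" if "T \<ge> 0" for T
  proof -
    have "(\<lambda>r. b (Q r + w r)) integrable_on {0..T}"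
      by (rule integrable_continuous_interval, rule continuous_on_subset[OF g]) auto
    thus ?thesis by (rule indefinite_integral_continuous_1)
  qed
  hence "continuous_on {0..} (\<lambda>s. integral {0..s} (\<lambda>r. b (Q r + w r)))" by (rule cont_local)
  thus ?thesis by (intro continuous_on_add continuous_on_const)
qed

lemma poly_integral:
  fixes M L :: real
  assumes "0 \<le> s"
  shows "((\<lambda>r. L * (M * (L * r) ^ k / fact k)) has_integral (M * (L * s) ^ Suc k / fact (Suc k))) {0..s}"
proof -
  define c where "c = M * L ^ Suc k / fact (Suc k)"
  have e1: "(\<lambda>r. M * (L * r) ^ Suc k / fact (Suc k)) = (\<lambda>r. c * r ^ Suc k)"
    by (auto simp: c_def power_mult_distrib)
  have e2: "c * (real (Suc k) * r ^ k) = L * (M * (L * r) ^ k / fact k)" for r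
    unfolding c_def fact_Suc by (simp add: power_mult_distrib field_simps del: of_nat_Suc)
  have "((\<lambda>r. c * r ^ Suc k) has_real_derivative c * (real (Suc k) * r ^ k)) (at r within {0..s})" for r
    by (rule DERIV_cmult) (use DERIV_pow[of "Suc k" r "{0..s}"] in simp)
  hence "((\<lambda>r. M * (L * r) ^ Suc k / fact (Suc k)) has_vector_derivative L * (M * (L * r) ^ k / fact k)) (at r within {0..s})" for r
    unfolding has_real_derivative_iff_has_vector_derivative[symmetric] e1 e2 .
  from fundamental_theorem_of_calculus[OF assms this] show ?thesis by simp
qed

lemma ode_exists:
  fixes b :: "'a::euclidean_space \<Rightarrow> 'a" and w :: "real \<Rightarrow> 'a"
  assumes lip: "L-lipschitz_on UNIV b" and w: "continuous_on {0..} w"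
  shows "\<exists>Y. continuous_on {0..} Y \<and> (\<forall>s\<ge>0. Y s = x + integral {0..s} (\<lambda>r. b (Y r + w r)))"
proof -
  have bc: "continuous_on UNIV b" using lipschitz_on_continuous_on[OF lip] .
  have L0: "0 \<le> L" using lip by (simp add: lipschitz_on_def)
  have bL: "norm (b u - b v) \<le> L * norm (u - v)" for u v
    using lip by (auto simp: lipschitz_on_def dist_norm)
  define F where "F Q = (\<lambda>s. x + integral {0..s} (\<lambda>r. b (Q r + w r)))" for Q :: "real \<Rightarrow> 'a"
  define P where "P = rec_nat (\<lambda>s::real. x) (\<lambda>k Q. F Q)"
  have P0: "P 0 = (\<lambda>s. x)" and PS: "P (Suc k) = F (P k)" for k by (simp_all add: P_def)
  have Pc: "continuous_on {0..} (P k)" for k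
    by (induction k) (auto simp: P0 PS F_def intro!: cont_F[OF bc w])
  have gint: "(\<lambda>r. b (Q r + w r)) integrable_on {0..s}" if "continuous_on {0..} Q" for Q s
    by (rule integrable_continuous_interval, rule continuous_on_subset[of "{0..}"])
       (auto intro!: continuous_on_compose2[OF bc] continuous_on_add w that)
  have Fdiff: "norm (F Q1 s - F Q2 s) \<le> integral {0..s} (\<lambda>r. L * g r)"
    if Q1: "continuous_on {0..} Q1" and Q2: "continuous_on {0..} Q2" and s: "0 \<le> s"
      and gb: "\<forall>r\<in>{0..s}. norm (Q1 r - Q2 r) \<le> g r" and gi: "(\<lambda>r. L * g r) integrable_on {0..s}"
    for Q1 Q2 s g
  proof -
    have "F Q1 s - F Q2 s = integral {0..s} (\<lambda>r. b (Q1 r + w r) - b (Q2 r + w r))"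
      unfolding F_def using gint[OF Q1] gint[OF Q2]
      by (simp add: Henstock_Kurzweil_Integration.integral_diff)
    also have "norm \<dots> \<le> integral {0..s} (\<lambda>r. L * g r)"
    proof (rule integral_norm_bound_integral)
      show "(\<lambda>r. b (Q1 r + w r) - b (Q2 r + w r)) integrable_on {0..s}"
        using gint[OF Q1] gint[OF Q2] by (rule integrable_diff)
      show "(\<lambda>r. L * g r) integrable_on {0..s}" by (rule gi)
      fix r assume "r \<in> {0..s}"
      have "norm (b (Q1 r + w r) - b (Q2 r + w r)) \<le> L * norm (Q1 r - Q2 r)"
        using bL[of "Q1 r + w r" "Q2 r + w r"] by simp
      also have "\<dots> \<le> L * g r" using gb \<open>r \<in> {0..s}\<close> L0 by (intro mult_left_mono) auto
      finally show "norm (b (Q1 r + w r) - b (Q2 r + w r)) \<le> L * g r" .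
    qed
    finally show ?thesis .
  qed
  define D where "D k s = P (Suc k) s - P k s" for k s
  define Y where "Y s = x + (\<Sum>k. D k s)" for s
  have Psum: "P n s = x + (\<Sum>i<n. D i s)" for n s
    unfolding D_def using sum_lessThan_telescope[of "\<lambda>i. P i s" n] by (simp add: P0)
  have UT: "uniform_limit {0..T} P Y sequentially" if T: "0 \<le> T" for T
  proof -
    have "bounded ((\<lambda>s. P 1 s - P 0 s) ` {0..T})"
      by (intro compact_imp_bounded compact_continuous_image continuous_on_diff)
         (auto intro: continuous_on_subset[OF Pc])
    then obtain M where M: "M > 0" "\<And>s. s \<in> {0..T} \<Longrightarrow> norm (P 1 s - P 0 s) \<le> M"
      unfolding bounded_pos by auto
    have dk: "\<forall>s\<in>{0..T}. norm (D k s) \<le> M * (L * s) ^ k / fact k" for k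
    proof (induction k)
      case 0 then show ?case using M by (simp add: D_def)
    next
      case (Suc k)
      show ?case
      proof
        fix s assume s: "s \<in> {0..T}"
        have hi: "((\<lambda>r. L * (M * (L * r) ^ k / fact k)) has_integral (M * (L * s) ^ Suc k / fact (Suc k))) {0..s}"
          using s by (intro poly_integral) auto
        have "norm (D (Suc k) s) = norm (F (P (Suc k)) s - F (P k) s)" by (simp add: D_def PS)
        also have "\<dots> \<le> integral {0..s} (\<lambda>r. L * (M * (L * r) ^ k / fact k))"
          using Suc s hi by (intro Fdiff Pc) (auto simp: D_def PS)
        also have "\<dots> = M * (L * s) ^ Suc k / fact (Suc k)" using hi by (rule integral_unique)
        finally show "norm (D (Suc k) s) \<le> M * (L * s) ^ Suc k / fact (Suc k)" .
      qed
    qed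
    have dkT: "norm (D k s) \<le> M * (L * T) ^ k / fact k" if "s \<in> {0..T}" for k s
    proof -
      have "(L * s) ^ k \<le> (L * T) ^ k" using that L0 by (intro power_mono mult_left_mono) auto
      hence "M * (L * s) ^ k / fact k \<le> M * (L * T) ^ k / fact k"
        using M by (intro divide_right_mono mult_left_mono) auto
      thus ?thesis using dk[of k] that by (meson order_trans)
    qed
    have sm: "summable (\<lambda>k. M * (L * T) ^ k / fact k)"
      using summable_mult[OF summable_exp[of "L * T"], of M] by (simp add: field_simps)
    have "uniform_limit {0..T} (\<lambda>n s. \<Sum>i<n. D i s) (\<lambda>s. \<Sum>i. D i s) sequentially"
      by (rule Weierstrass_m_test[OF _ sm]) (rule dkT)
    hence "uniform_limit {0..T} (\<lambda>n s. x + (\<Sum>i<n. D i s)) (\<lambda>s. x + (\<Sum>i. D i s)) sequentially"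
      by (intro uniform_limit_add uniform_limit_const)
    thus ?thesis unfolding Psum[abs_def] Y_def[abs_def] .
  qed
  have Yc: "continuous_on {0..} Y"
  proof (rule cont_local)
    fix T :: real assume "0 \<le> T"
    show "continuous_on {0..T} Y"
      by (rule uniform_limit_theorem[OF _ UT[OF \<open>0 \<le> T\<close>]])
         (auto intro!: always_eventually continuous_on_subset[OF Pc])
  qed
  have fixp: "Y s = F Y s" if s: "0 \<le> s" for s
  proof -
    have "(\<lambda>n. P n s) \<longlonglongrightarrow> Y s" using tendsto_uniform_limitI[OF UT[OF s]] s by simp
    hence l1: "(\<lambda>n. P (Suc n) s) \<longlonglongrightarrow> Y s" by (rule LIMSEQ_Suc)
    have l2: "(\<lambda>n. P (Suc n) s) \<longlonglongrightarrow> F Y s"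
      unfolding PS tendsto_iff
    proof (intro allI impI)
      fix e :: real assume e: "e > 0"
      define e' where "e' = e / (L * s + 1)"
      have e': "e' > 0" using e L0 s by (simp add: e'_def add_nonneg_pos)
      have ev: "\<forall>\<^sub>F n in sequentially. \<forall>r\<in>{0..s}. dist (P n r) (Y r) < e'"
        by (rule uniform_limitD[OF UT[OF s] e'])
      show "\<forall>\<^sub>F n in sequentially. dist (F (P n) s) (F Y s) < e"
      proof (rule eventually_mono[OF ev])
        fix n assume H: "\<forall>r\<in>{0..s}. dist (P n r) (Y r) < e'"
        have "norm (F (P n) s - F Y s) \<le> integral {0..s} (\<lambda>r. L * e')"
          using H s by (intro Fdiff Pc Yc) (auto simp: dist_norm less_imp_le)
        also have "\<dots> = s * (L * e')" using s by simp
        also have "\<dots> < e"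
        proof -
          have "s * (L * e') = e * (L * s) / (L * s + 1)" by (simp add: e'_def field_simps)
          also have "\<dots> < e"
          proof -
            have p: "0 < L * s + 1" using L0 s by (simp add: add_nonneg_pos)
            have "e * (L * s) < e * (L * s + 1)" using e by simp
            thus ?thesis using p by (simp add: divide_less_eq)
          qed
          finally show ?thesis .
        qed
        finally show "dist (F (P n) s) (F Y s) < e" by (simp add: dist_norm)
      qed
    qed
    show ?thesis using LIMSEQ_unique[OF l1 l2] .
  qed
  show ?thesis using Yc fixp unfolding F_def by blast
qed



lemma key_ineq:
  fixes b :: "'a::euclidean_space \<Rightarrow> 'a"
  assumes bL: "\<And>u v. norm (b u - b v) \<le> L * norm (u - v)" and L0: "0 \<le> L"
    and dissip: "\<And>x. inner (b x) x \<le> R1 - R2 * (norm x)\<^sup>2" and R2: "R2 > 0"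
  shows "2 * inner (b X) (X - V) \<le> - (R2 / 2) * (norm (X - V))\<^sup>2
           + (2 * \<bar>R1\<bar> + norm (b 0)) + (R2 + norm (b 0) + L\<^sup>2 / R2) * (norm V)\<^sup>2"
proof -
  define nx where "nx = norm X"
  define nv where "nv = norm V"
  define ny where "ny = norm (X - V)"
  define nb where "nb = norm (b X)"
  define B0 where "B0 = norm (b 0)"
  have ip: "inner (b X) (X - V) = inner (b X) X - inner (b X) V" by (simp add: inner_diff_right)
  have cs: "- (nb * nv) \<le> inner (b X) V" unfolding nb_def nv_def
    using Cauchy_Schwarz_ineq2[of "b X" V] by linarith
  have d: "inner (b X) X \<le> R1 - R2 * nx\<^sup>2" using dissip[of X] by (simp add: nx_def)
  have nbb: "nb \<le> B0 + L * nx"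
  proof -
    have "norm (b X) \<le> norm (b 0) + norm (b X - b 0)" by (rule norm_triangle_sub)
    also have "norm (b X - b 0) \<le> L * norm X" using bL[of X 0] by simp
    finally show ?thesis by (simp add: nb_def B0_def nx_def)
  qed
  have nn: "0 \<le> nx" "0 \<le> nv" "0 \<le> ny" "0 \<le> nb" "0 \<le> B0"
    by (auto simp: nx_def nv_def ny_def nb_def B0_def)
  have tri: "ny \<le> nx + nv" unfolding ny_def nx_def nv_def by (rule norm_triangle_ineq4)
  have ny2: "ny\<^sup>2 \<le> 2 * nx\<^sup>2 + 2 * nv\<^sup>2"
  proof -
    have "ny\<^sup>2 \<le> (nx + nv)\<^sup>2" using tri nn by (intro power_mono) auto
    also have "\<dots> \<le> 2 * nx\<^sup>2 + 2 * nv\<^sup>2" using sum_squares_ge_zero[of "nx - nv" 0]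
      by (simp add: power2_eq_square algebra_simps)
    finally show ?thesis .
  qed
  have amgm: "L * nx * nv \<le> R2 / 2 * nx\<^sup>2 + L\<^sup>2 / (2 * R2) * nv\<^sup>2"
  proof -
    have "0 \<le> (R2 * nx - L * nv)\<^sup>2" by simp
    hence "2 * R2 * (L * nx * nv) \<le> R2 * (R2 * nx\<^sup>2) + L\<^sup>2 * nv\<^sup>2"
      by (simp add: power2_eq_square algebra_simps)
    moreover have "R2 / 2 * nx\<^sup>2 + L\<^sup>2 / (2 * R2) * nv\<^sup>2 = (R2 * (R2 * nx\<^sup>2) + L\<^sup>2 * nv\<^sup>2) / (2 * R2)"
      using R2 by (simp add: field_simps power2_eq_square)
    ultimately show ?thesis using R2 by (simp add: pos_le_divide_eq mult.commute mult.left_commute)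
  qed
  have b0w: "B0 * nv \<le> B0 / 2 + B0 / 2 * nv\<^sup>2"
  proof -
    have "0 \<le> B0 * (nv - 1)\<^sup>2" using nn by simp
    thus ?thesis by (simp add: power2_eq_square algebra_simps)
  qed
  have "nb * nv \<le> B0 * nv + L * nx * nv" using nbb nn by (metis distrib_right mult_right_mono)
  hence I1: "inner (b X) (X - V) \<le> R1 - R2 * nx\<^sup>2 + B0 / 2 + B0 / 2 * nv\<^sup>2 + R2 / 2 * nx\<^sup>2 + L\<^sup>2 / (2 * R2) * nv\<^sup>2"
    using ip cs d amgm b0w by linarith
  have "2 * inner (b X) (X - V) \<le> - (R2 / 2) * ny\<^sup>2 + (2 * R1 + B0) + (R2 + B0 + L\<^sup>2 / R2) * nv\<^sup>2"
  proof -
    have "R2 / 2 * ny\<^sup>2 \<le> R2 / 2 * (2 * nx\<^sup>2 + 2 * nv\<^sup>2)"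
      using ny2 R2 by (intro mult_left_mono) auto
    hence h1: "R2 / 2 * ny\<^sup>2 \<le> R2 * nx\<^sup>2 + R2 * nv\<^sup>2" by (simp add: algebra_simps)
    have h2: "2 * (L\<^sup>2 / (2 * R2) * nv\<^sup>2) = L\<^sup>2 / R2 * nv\<^sup>2" by simp
    have q: "R2 / 2 * nx\<^sup>2 = (R2 * nx\<^sup>2) / 2" "B0 / 2 * nv\<^sup>2 = (B0 * nv\<^sup>2) / 2"
      "L\<^sup>2 / (2 * R2) * nv\<^sup>2 = (L\<^sup>2 / R2 * nv\<^sup>2) / 2" "R2 / 2 * ny\<^sup>2 = (R2 * ny\<^sup>2) / 2"
      "(R2 + B0 + L\<^sup>2 / R2) * nv\<^sup>2 = R2 * nv\<^sup>2 + B0 * nv\<^sup>2 + L\<^sup>2 / R2 * nv\<^sup>2"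
      "- (R2 / 2) * ny\<^sup>2 = - ((R2 * ny\<^sup>2) / 2)"
      by (simp_all add: algebra_simps)
    have lin: "i \<le> r1 - a + c0 / 2 + c / 2 + a / 2 + d / 2 \<Longrightarrow> e / 2 \<le> a + bq \<Longrightarrow>
        2 * i \<le> - (e / 2) + (2 * r1 + c0) + (bq + c + d)" for i r1 a c0 c d e bq :: real
      by linarith
    show ?thesis using lin[OF I1[unfolded q] h1[unfolded q]] unfolding q .
  qed
  moreover have "2 * R1 \<le> 2 * \<bar>R1\<bar>" by simp
  ultimately show ?thesis by (simp add: ny_def nv_def B0_def)
qed

lemma path_bound:
  fixes b :: "'a::euclidean_space \<Rightarrow> 'a" and w Y :: "real \<Rightarrow> 'a"
  assumes bL: "\<And>u v. norm (b u - b v) \<le> L * norm (u - v)" and L0: "0 \<le> L"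
    and dissip: "\<And>x. inner (b x) x \<le> R1 - R2 * (norm x)\<^sup>2" and R2: "R2 > 0"
    and bc: "continuous_on UNIV b"
    and w: "continuous_on {0..} w" and Yc: "continuous_on {0..} Y"
    and eq: "\<forall>s\<ge>0. Y s = x + integral {0..s} (\<lambda>r. b (Y r + w r))" and t: "0 \<le> t"
  shows "(norm (Y t))\<^sup>2 \<le> exp (- (R2 / 2) * t) * (norm x)\<^sup>2
      + integral {0..t} (\<lambda>r. (2 * \<bar>R1\<bar> + norm (b 0)) + (R2 + norm (b 0) + L\<^sup>2 / R2) * (norm (w r))\<^sup>2)"
proof -
  define c where "c = R2 / 2"
  define K1 where "K1 = 2 * \<bar>R1\<bar> + norm (b 0)"
  define K2 where "K2 = R2 + norm (b 0) + L\<^sup>2 / R2"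
  have K: "0 \<le> K1" "0 \<le> K2" using R2 by (auto simp: K1_def K2_def)
  define G where "G r = b (Y r + w r)" for r
  define h where "h r = K1 + K2 * (norm (w r))\<^sup>2" for r
  have h0: "0 \<le> h r" for r using K by (simp add: h_def)
  have Gc: "continuous_on {0..t} G" unfolding G_def
    by (intro continuous_on_compose2[OF bc] continuous_on_add continuous_on_subset[OF Yc] continuous_on_subset[OF w]) auto
  have hc: "continuous_on {0..t} h" unfolding h_def
    by (intro continuous_intros continuous_on_subset[OF w]) auto
  have ehc: "continuous_on {0..t} (\<lambda>r. exp (c * r) * h r)"
    by (intro continuous_intros hc)
  define Yd where "Yd s = x + integral {0..s} G" for s
  have YYd: "Y s = Yd s" if "0 \<le> s" for s using eq that by (simp add: Yd_def G_def[abs_def])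
  have Ydc: "continuous_on {0..t} Yd" unfolding Yd_def
    by (intro continuous_on_add continuous_on_const indefinite_integral_continuous_1 integrable_continuous_interval Gc)
  define I where "I s = integral {0..s} (\<lambda>r. exp (c * r) * h r)" for s
  have Ic: "continuous_on {0..t} I" unfolding I_def
    by (intro indefinite_integral_continuous_1 integrable_continuous_interval ehc)
  define \<phi> where "\<phi> s = exp (c * s) * (Yd s \<bullet> Yd s) - I s" for s
  have \<phi>c: "continuous_on {0..t} \<phi>" unfolding \<phi>_def
    by (intro continuous_intros Ydc Ic)
  have der: "\<exists>y. DERIV \<phi> s :> y \<and> y \<le> 0" if s: "0 < s" "s < t" for s
  proof -
    have int: "s \<in> interior {0..t}" using s by simp
    have dY0: "((\<lambda>u. integral {0..u} G) has_vector_derivative G s) (at s)"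
      using integral_has_vector_derivative[OF Gc, of s] s at_within_interior[OF int] by simp
    have dY: "(Yd has_derivative (\<lambda>d. d *\<^sub>R G s)) (at s)"
      using has_vector_derivative_add[OF has_vector_derivative_const[of x] dY0]
      unfolding has_vector_derivative_def Yd_def by simp
    have dZ: "DERIV (\<lambda>u. Yd u \<bullet> Yd u) s :> 2 * (G s \<bullet> Yd s)"
      unfolding has_field_derivative_def
      using has_derivative_inner[OF dY dY]
      by (rule has_derivative_eq_rhs) (auto simp: fun_eq_iff inner_commute algebra_simps)
    have dI: "DERIV I s :> exp (c * s) * h s"
      using integral_has_real_derivative[OF ehc, of s] s at_within_interior[OF int] by (simp add: I_def[abs_def])
    have dE: "DERIV (\<lambda>u. exp (c * u)) s :> exp (c * s) * c"
      by (auto intro!: derivative_eq_intros)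
    have D: "DERIV \<phi> s :> (exp (c * s) * c * (Yd s \<bullet> Yd s) + 2 * (G s \<bullet> Yd s) * exp (c * s)) - exp (c * s) * h s"
      unfolding \<phi>_def[abs_def] by (intro DERIV_diff DERIV_mult dE dZ dI)
    have GY: "G s = b ((Yd s + w s))" using YYd[of s] s by (simp add: G_def)
    have k: "2 * inner (b (Yd s + w s)) ((Yd s + w s) - w s) \<le> - (R2 / 2) * (norm ((Yd s + w s) - w s))\<^sup>2
           + (2 * \<bar>R1\<bar> + norm (b 0)) + (R2 + norm (b 0) + L\<^sup>2 / R2) * (norm (w s))\<^sup>2"
      by (rule key_ineq[OF bL L0 dissip R2])
    hence k': "c * (Yd s \<bullet> Yd s) + 2 * (G s \<bullet> Yd s) - h s \<le> 0"
      by (simp add: GY c_def h_def K1_def K2_def power2_norm_eq_inner)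
    have "exp (c * s) * (c * (Yd s \<bullet> Yd s) + 2 * (G s \<bullet> Yd s) - h s) \<le> 0"
      using k' by (simp add: mult_nonneg_nonpos)
    hence "(exp (c * s) * c * (Yd s \<bullet> Yd s) + 2 * (G s \<bullet> Yd s) * exp (c * s)) - exp (c * s) * h s \<le> 0"
      by (simp add: algebra_simps)
    thus ?thesis using D by blast
  qed
  have "\<phi> t \<le> \<phi> 0" by (rule DERIV_nonpos_imp_decreasing_open[OF t der \<phi>c])
  hence A: "exp (c * t) * (norm (Y t))\<^sup>2 \<le> (norm x)\<^sup>2 + I t"
    using YYd[OF t] by (simp add: \<phi>_def I_def Yd_def power2_norm_eq_inner)
  have "I t \<le> integral {0..t} (\<lambda>r. exp (c * t) * h r)" unfolding I_def
  proof (rule integral_le)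
    show "(\<lambda>r. exp (c * r) * h r) integrable_on {0..t}" by (rule integrable_continuous_interval[OF ehc])
    show "(\<lambda>r. exp (c * t) * h r) integrable_on {0..t}"
      by (rule integrable_continuous_interval) (intro continuous_intros hc)
    fix r assume "r \<in> {0..t}"
    thus "exp (c * r) * h r \<le> exp (c * t) * h r"
      using h0[of r] R2 by (intro mult_right_mono) (auto simp: c_def)
  qed
  also have "\<dots> = exp (c * t) * integral {0..t} h"
    by (rule Henstock_Kurzweil_Integration.integral_mult_right)
  finally have "exp (c * t) * (norm (Y t))\<^sup>2 \<le> (norm x)\<^sup>2 + exp (c * t) * integral {0..t} h"
    using A by simp
  hence "exp (- c * t) * (exp (c * t) * (norm (Y t))\<^sup>2) \<le> exp (- c * t) * ((norm x)\<^sup>2 + exp (c * t) * integral {0..t} h)"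
    by (intro mult_left_mono) auto
  hence "(norm (Y t))\<^sup>2 \<le> exp (- c * t) * (norm x)\<^sup>2 + integral {0..t} h"
    by (simp add: distrib_left mult.assoc[symmetric] exp_add[symmetric])
  thus ?thesis by (simp add: c_def h_def[abs_def] K1_def K2_def)
qed



lemma gauss_pointwise:
  assumes s: "0 < s"
  shows "gauss_density s (z::'a::euclidean_space) * (norm z)\<^sup>2 \<le> (4 * s * 2 powr (real DIM('a) / 2)) * gauss_density (2 * s) z"
proof -
  define d where "d = real DIM('a)"
  define u where "u = (norm z)\<^sup>2"
  define P where "P = (2 * pi * s) powr (- d / 2)"
  define Q where "Q = (2 * pi * (2 * s)) powr (- d / 2)"
  have u0: "0 \<le> u" by (simp add: u_def)
  have PQ: "P = 2 powr (d / 2) * Q"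
  proof -
    have "Q = (2 * (2 * pi * s)) powr (- d / 2)" by (simp add: Q_def mult_ac)
    also have "\<dots> = 2 powr (- d / 2) * P" unfolding P_def using s by (subst powr_mult) auto
    finally have "2 powr (d / 2) * Q = (2 powr (d / 2) * 2 powr (- d / 2)) * P" by simp
    also have "2 powr (d / 2) * 2 powr (- d / 2) = 1" by (simp add: powr_add[symmetric])
    finally show ?thesis by simp
  qed
  have Q0: "0 \<le> Q" by (simp add: Q_def)
  define v where "v = u / (4 * s)"
  have ev: "exp (- u / (2 * s)) = exp (- v) * exp (- v)"
    by (simp add: v_def exp_add[symmetric] field_simps)
  have uv: "u * exp (- v) \<le> 4 * s"
  proof -
    have "v \<le> exp v" using exp_ge_add_one_self[of v] by linarith
    hence "4 * s * v \<le> 4 * s * exp v" using s by simp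
    hence "u \<le> 4 * s * exp v" using s by (simp add: v_def)
    hence "u * exp (- v) \<le> 4 * s * exp v * exp (- v)" by (intro mult_right_mono) auto
    thus ?thesis by (simp add: exp_minus field_simps)
  qed
  have "gauss_density s z * (norm z)\<^sup>2 = P * exp (- v) * (u * exp (- v))"
    unfolding gauss_density_def P_def u_def[symmetric] d_def[symmetric] ev by (simp add: mult_ac)
  also have "\<dots> \<le> P * exp (- v) * (4 * s)"
    using uv PQ Q0 by (intro mult_left_mono) auto
  also have "\<dots> = (4 * s * 2 powr (d / 2)) * (Q * exp (- v))" by (simp add: PQ mult_ac)
  also have "Q * exp (- v) = gauss_density (2 * s) z"
    unfolding gauss_density_def Q_def d_def v_def u_def by (simp add: field_simps)
  finally show ?thesis by (simp add: d_def)
qed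

lemma gauss_moment:
  fixes W :: "real \<Rightarrow> 'b \<Rightarrow> 'a::euclidean_space"
  assumes BM: "brownian_motion M W" and s: "0 \<le> s"
  shows "(\<integral>\<^sup>+\<omega>. ennreal ((norm (W s \<omega>))\<^sup>2) \<partial>M) \<le> ennreal (4 * s * 2 powr (real DIM('a) / 2))"
proof (cases "s = 0")
  case True
  have "(\<integral>\<^sup>+\<omega>. ennreal ((norm (W s \<omega>))\<^sup>2) \<partial>M) = (\<integral>\<^sup>+\<omega>. 0 \<partial>M)"
    using BM True by (intro nn_integral_cong) (auto simp: brownian_motion_def)
  then show ?thesis by simp
next
  case False
  hence s: "0 < s" using s by simp
  have ps: "prob_space M" using BM by (simp add: brownian_motion_def)
  have W0: "W 0 \<omega> = 0" if "\<omega> \<in> space M" for \<omega> using BM that by (simp add: brownian_motion_def)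
  have dd: "distributed M lborel (\<lambda>\<omega>. W t \<omega> - W 0 \<omega>) (\<lambda>z. ennreal (gauss_density (t - 0) z))" if "0 < t" for t
    using BM that unfolding brownian_motion_def by blast
  have d1: "distributed M lborel (\<lambda>\<omega>. W s \<omega> - W 0 \<omega>) (\<lambda>z. ennreal (gauss_density s z))"
    using dd[OF s] by simp
  have d2: "distributed M lborel (\<lambda>\<omega>. W (2 * s) \<omega> - W 0 \<omega>) (\<lambda>z. ennreal (gauss_density (2 * s) z))"
    using dd[of "2 * s"] s by simp
  define C where "C = 4 * s * 2 powr (real DIM('a) / 2)"
  have C0: "0 \<le> C" using s by (simp add: C_def)
  have "(\<integral>\<^sup>+\<omega>. ennreal ((norm (W s \<omega>))\<^sup>2) \<partial>M) = (\<integral>\<^sup>+\<omega>. ennreal ((norm (W s \<omega> - W 0 \<omega>))\<^sup>2) \<partial>M)"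
    using W0 by (intro nn_integral_cong) simp
  also have "\<dots> = (\<integral>\<^sup>+(z::'a). ennreal (gauss_density s z) * ennreal ((norm z)\<^sup>2) \<partial>lborel)"
    by (subst distributed_nn_integral[OF d1]) auto
  also have "\<dots> \<le> (\<integral>\<^sup>+(z::'a). ennreal C * (ennreal (gauss_density (2 * s) z) * 1) \<partial>lborel)"
  proof (rule nn_integral_mono)
    fix z :: 'a
    have g0: "0 \<le> gauss_density (2 * s) z" by (simp add: gauss_density_def)
    have "ennreal (gauss_density s z) * ennreal ((norm z)\<^sup>2) = ennreal (gauss_density s z * (norm z)\<^sup>2)"
      by (simp add: ennreal_mult gauss_density_def)
    also have "\<dots> \<le> ennreal (C * gauss_density (2 * s) z)"
      using gauss_pointwise[OF s, of z] by (intro ennreal_leI) (simp add: C_def)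
    also have "\<dots> = ennreal C * (ennreal (gauss_density (2 * s) z) * 1)"
      using C0 g0 by (simp add: ennreal_mult)
    finally show "ennreal (gauss_density s z) * ennreal ((norm z)\<^sup>2) \<le> ennreal C * (ennreal (gauss_density (2 * s) z) * 1)" .
  qed
  also have "\<dots> = ennreal C * (\<integral>\<^sup>+(z::'a). ennreal (gauss_density (2 * s) z) * 1 \<partial>lborel)"
    by (rule nn_integral_cmult) (use d2 in \<open>auto dest: distributed_borel_measurable\<close>)
  also have "(\<integral>\<^sup>+(z::'a). ennreal (gauss_density (2 * s) z) * 1 \<partial>lborel) = (\<integral>\<^sup>+\<omega>. 1 \<partial>M)"
    using distributed_nn_integral[OF d2, of "\<lambda>z. 1"] by simp
  also have "(\<integral>\<^sup>+\<omega>. 1 \<partial>M) = 1"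
    using prob_space.emeasure_space_1[OF ps] by simp
  finally show ?thesis by (simp add: C_def)
qed

lemma floor_approx: "(\<lambda>N. real_of_int \<lfloor>real (Suc N) * s\<rfloor> / real (Suc N)) \<longlonglongrightarrow> (s::real)"
proof (rule tendsto_sandwich[where f = "\<lambda>N. s - inverse (real (Suc N))" and h = "\<lambda>N. s"])
  show "\<forall>\<^sub>F N in sequentially. s - inverse (real (Suc N)) \<le> real_of_int \<lfloor>real (Suc N) * s\<rfloor> / real (Suc N)"
  proof (intro always_eventually allI)
    fix N
    have p: "0 < real (Suc N)" by simp
    have "real (Suc N) * s - 1 \<le> real_of_int \<lfloor>real (Suc N) * s\<rfloor>" by linarith
    hence "(real (Suc N) * s - 1) / real (Suc N) \<le> real_of_int \<lfloor>real (Suc N) * s\<rfloor> / real (Suc N)"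
      using p by (intro divide_right_mono) auto
    moreover have "s - inverse (real (Suc N)) = (real (Suc N) * s - 1) / real (Suc N)"
      using p by (simp add: field_simps)
    ultimately show "s - inverse (real (Suc N)) \<le> real_of_int \<lfloor>real (Suc N) * s\<rfloor> / real (Suc N)"
      by simp
  qed
  show "\<forall>\<^sub>F N in sequentially. real_of_int \<lfloor>real (Suc N) * s\<rfloor> / real (Suc N) \<le> s"
  proof (intro always_eventually allI)
    fix N
    have p: "0 < real (Suc N)" by simp
    have "real_of_int \<lfloor>real (Suc N) * s\<rfloor> \<le> real (Suc N) * s" by linarith
    thus "real_of_int \<lfloor>real (Suc N) * s\<rfloor> / real (Suc N) \<le> s"
      using p by (simp add: field_simps)
  qed
  show "(\<lambda>N. s - inverse (real (Suc N))) \<longlonglongrightarrow> s"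
    using tendsto_diff[OF tendsto_const LIMSEQ_inverse_real_of_nat] by simp
qed simp

lemma joint_meas:
  fixes W :: "real \<Rightarrow> 'b \<Rightarrow> 'a::euclidean_space"
  assumes Wm: "\<And>t. W t \<in> borel_measurable M" and Wc: "\<And>\<omega>. \<omega> \<in> space M \<Longrightarrow> continuous_on {0..} (\<lambda>t. W t \<omega>)"
  shows "(\<lambda>p. W (max 0 (fst p)) (snd p)) \<in> borel_measurable ((lborel :: real measure) \<Otimes>\<^sub>M M)"
proof (rule borel_measurable_LIMSEQ_metric)
  fix N :: nat
  show "(\<lambda>p. W (max 0 (real_of_int \<lfloor>real (Suc N) * fst p\<rfloor> / real (Suc N))) (snd p)) \<in> borel_measurable ((lborel :: real measure) \<Otimes>\<^sub>M M)"
  proof (rule measurable_compose_countable[where f = "\<lambda>i p. W (max 0 (real_of_int i / real (Suc N))) (snd p)"])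
    fix i :: int
    show "(\<lambda>p. W (max 0 (real_of_int i / real (Suc N))) (snd p)) \<in> borel_measurable ((lborel :: real measure) \<Otimes>\<^sub>M M)"
      using Wm by measurable
  next
    show "(\<lambda>p. \<lfloor>real (Suc N) * fst p\<rfloor>) \<in> measurable ((lborel :: real measure) \<Otimes>\<^sub>M M) (count_space UNIV)"
      by measurable
  qed
next
  fix p assume p: "p \<in> space ((lborel :: real measure) \<Otimes>\<^sub>M M)"
  hence om: "snd p \<in> space M" by (auto simp: space_pair_measure)
  have l: "(\<lambda>N. max 0 (real_of_int \<lfloor>real (Suc N) * fst p\<rfloor> / real (Suc N))) \<longlonglongrightarrow> max 0 (fst p)"
    by (intro tendsto_max tendsto_const floor_approx)
  show "(\<lambda>N. W (max 0 (real_of_int \<lfloor>real (Suc N) * fst p\<rfloor> / real (Suc N))) (snd p)) \<longlonglongrightarrow> W (max 0 (fst p)) (snd p)"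
    by (rule continuous_on_tendsto_compose[OF Wc[OF om] l]) auto
qed



lemma young:
  fixes Y V :: "'a::real_normed_vector"
  assumes e: "0 < e"
  shows "(norm (Y + V))\<^sup>2 \<le> (1 + e) * (norm Y)\<^sup>2 + (1 + 1 / e) * (norm V)\<^sup>2"
proof -
  define p where "p = norm Y"
  define r where "r = norm V"
  have "norm (Y + V) \<le> p + r" unfolding p_def r_def by (rule norm_triangle_ineq)
  hence "(norm (Y + V))\<^sup>2 \<le> (p + r)\<^sup>2" by (intro power_mono) auto
  also have "2 * p * r \<le> e * p\<^sup>2 + 1 / e * r\<^sup>2"
  proof -
    have "0 \<le> (e * p - r)\<^sup>2" by simp
    hence "2 * e * (p * r) \<le> e * (e * p\<^sup>2) + r\<^sup>2" by (simp add: power2_eq_square algebra_simps)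
    moreover have "e * p\<^sup>2 + 1 / e * r\<^sup>2 = (e * (e * p\<^sup>2) + r\<^sup>2) / e" using e by (simp add: field_simps power2_eq_square)
    ultimately show ?thesis using e by (simp add: pos_le_divide_eq mult.commute mult.left_commute)
  qed
  hence "(p + r)\<^sup>2 \<le> (1 + e) * p\<^sup>2 + (1 + 1 / e) * r\<^sup>2" by (simp add: power2_eq_square algebra_simps)
  finally show ?thesis by (simp add: p_def r_def)
qed

lemma kernel_bounds:
  fixes b :: "'a::euclidean_space \<Rightarrow> 'a"
    and M :: "'b measure" and W :: "real \<Rightarrow> 'b \<Rightarrow> 'a"
    and S :: "'a \<Rightarrow> 'a \<Rightarrow> real"
    and t R1 R2 :: real
  assumes lip: "\<exists>C. C-lipschitz_on UNIV b"
    and dissip: "\<forall>x. inner (b x) x \<le> R1 - R2 * (norm x)\<^sup>2" and R2: "R2 > 0"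
    and BM: "brownian_motion M W"
    and t: "t > 0"
    and S_density: "\<forall>x X. sde_solution M W b x X \<longrightarrow>
                      distributed M lborel (X t) (\<lambda>y. ennreal (S x y))"
  shows "\<exists>a bb. 0 \<le> a \<and> a < 1 \<and> 0 \<le> bb \<and>
    (\<forall>x. (\<integral>\<^sup>+y. ennreal (S x y) * 1 \<partial>lborel) \<le> 1 \<and>
         (\<integral>\<^sup>+y. ennreal (S x y) * ennreal (1 + (norm y)\<^sup>2) \<partial>lborel) \<le> ennreal (a * (1 + (norm x)\<^sup>2)) + ennreal bb)"
proof -
  obtain L where lipL: "L-lipschitz_on UNIV b" using lip by blast
  have L0: "0 \<le> L" using lipL by (simp add: lipschitz_on_def)
  have bL: "norm (b u - b v) \<le> L * norm (u - v)" for u v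
    using lipL by (auto simp: lipschitz_on_def dist_norm)
  have bc: "continuous_on UNIV b" using lipschitz_on_continuous_on[OF lipL] .
  have dis: "inner (b x) x \<le> R1 - R2 * (norm x)\<^sup>2" for x using dissip by blast
  have ps: "prob_space M" using BM by (simp add: brownian_motion_def)
  interpret ps: prob_space M by (rule ps)
  interpret pp: pair_sigma_finite "lborel :: real measure" M
    by (intro pair_sigma_finite.intro lborel.sigma_finite_measure_axioms ps.sigma_finite_measure_axioms)
  have Wm[measurable]: "W s \<in> borel_measurable M" for s using BM by (simp add: brownian_motion_def)
  have Wc: "continuous_on {0..} (\<lambda>s. W s \<omega>)" if "\<omega> \<in> space M" for \<omega>
    using BM that by (simp add: brownian_motion_def)
  have JM: "(\<lambda>p. W (max 0 (fst p)) (snd p)) \<in> borel_measurable ((lborel :: real measure) \<Otimes>\<^sub>M M)"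
    by (rule joint_meas[OF Wm Wc])
  define q where "q = exp (- (R2 / 2) * t)"
  have q: "0 < q" "q < 1" using R2 t by (auto simp: q_def)
  define eps where "eps = (1 - q) / (2 * q)"
  have eps: "0 < eps" using q by (simp add: eps_def)
  define a where "a = (1 + eps) * q"
  have a_eq: "a = (1 + q) / 2" using q by (simp add: a_def eps_def field_simps)
  have a: "0 \<le> a" "a < 1" using q by (auto simp: a_eq)
  define Ct where "Ct = 4 * t * 2 powr (real DIM('a) / 2)"
  have Ct: "0 \<le> Ct" using t by (simp add: Ct_def)
  define K1 where "K1 = 2 * \<bar>R1\<bar> + norm (b 0)"
  define K2 where "K2 = R2 + norm (b 0) + L\<^sup>2 / R2"
  have K: "0 \<le> K1" "0 \<le> K2" using R2 by (auto simp: K1_def K2_def)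
  define bb where "bb = 1 + (1 + 1 / eps) * Ct + (1 + eps) * (t * (K1 + K2 * Ct))"
  have bb: "0 \<le> bb" using eps Ct K t by (simp add: bb_def)
  have mom: "(\<integral>\<^sup>+\<omega>. ennreal ((norm (W s \<omega>))\<^sup>2) \<partial>M) \<le> ennreal Ct" if "0 \<le> s" "s \<le> t" for s
  proof -
    have "(\<integral>\<^sup>+\<omega>. ennreal ((norm (W s \<omega>))\<^sup>2) \<partial>M) \<le> ennreal (4 * s * 2 powr (real DIM('a) / 2))"
      by (rule gauss_moment[OF BM that(1)])
    also have "\<dots> \<le> ennreal Ct" unfolding Ct_def using that by (intro ennreal_leI mult_right_mono) auto
    finally show ?thesis .
  qed
  define Hj where "Hj r \<omega> = ennreal (K1 + K2 * (norm (W (max 0 r) \<omega>))\<^sup>2) * indicator {0..t} r" for r \<omega>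
  have Hjm: "case_prod Hj \<in> borel_measurable ((lborel :: real measure) \<Otimes>\<^sub>M M)"
    using JM unfolding Hj_def by (simp add: case_prod_beta) measurable
  have Hjm2: "(\<lambda>\<omega>. \<integral>\<^sup>+r. Hj r \<omega> \<partial>lborel) \<in> borel_measurable M"
  proof -
    have "case_prod (\<lambda>\<omega> r. Hj r \<omega>) \<in> borel_measurable (M \<Otimes>\<^sub>M (lborel :: real measure))"
      using measurable_pair_swap[OF Hjm] by (simp add: case_prod_beta)
    thus ?thesis by (rule lborel.borel_measurable_nn_integral)
  qed
  have F2: "(\<integral>\<^sup>+\<omega>. (\<integral>\<^sup>+r. Hj r \<omega> \<partial>lborel) \<partial>M) \<le> ennreal (t * (K1 + K2 * Ct))"
  proof -
    have "(\<integral>\<^sup>+\<omega>. (\<integral>\<^sup>+r. Hj r \<omega> \<partial>lborel) \<partial>M) = (\<integral>\<^sup>+r. (\<integral>\<^sup>+\<omega>. Hj r \<omega> \<partial>M) \<partial>lborel)"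
      using pp.Fubini'[OF Hjm] by simp
    also have "\<dots> \<le> (\<integral>\<^sup>+r. ennreal (K1 + K2 * Ct) * indicator {0..t} r \<partial>lborel)"
    proof (rule nn_integral_mono)
      fix r :: real
      show "(\<integral>\<^sup>+\<omega>. Hj r \<omega> \<partial>M) \<le> ennreal (K1 + K2 * Ct) * indicator {0..t} r"
      proof (cases "r \<in> {0..t}")
        case False
        then show ?thesis by (simp add: Hj_def)
      next
        case True
        have "(\<integral>\<^sup>+\<omega>. Hj r \<omega> \<partial>M) = (\<integral>\<^sup>+\<omega>. ennreal K1 + ennreal K2 * ennreal ((norm (W r \<omega>))\<^sup>2) \<partial>M)"
          using True K by (intro nn_integral_cong) (simp add: Hj_def ennreal_plus[symmetric] ennreal_mult[symmetric] del: ennreal_plus)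
        also have "\<dots> = ennreal K1 + ennreal K2 * (\<integral>\<^sup>+\<omega>. ennreal ((norm (W r \<omega>))\<^sup>2) \<partial>M)"
          by (subst nn_integral_add) (auto simp: nn_integral_cmult ps.emeasure_space_1)
        also have "\<dots> \<le> ennreal K1 + ennreal K2 * ennreal Ct"
          using mom[of r] True by (intro add_left_mono mult_left_mono) auto
        also have "\<dots> = ennreal (K1 + K2 * Ct) * indicator {0..t} r"
          using True K Ct by (simp add: ennreal_plus[symmetric] ennreal_mult[symmetric] del: ennreal_plus)
        finally show ?thesis .
      qed
    qed
    also have "\<dots> = ennreal (K1 + K2 * Ct) * ennreal t"
      using t by (subst nn_integral_cmult_indicator) auto
    also have "\<dots> = ennreal (t * (K1 + K2 * Ct))"
      using t K Ct by (subst ennreal_mult) (auto simp: mult.commute)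
    finally show ?thesis .
  qed
  have F1: "(\<integral>\<^sup>+\<omega>. ennreal (1 + (1 + 1 / eps) * (norm (W t \<omega>))\<^sup>2) \<partial>M) \<le> ennreal (1 + (1 + 1 / eps) * Ct)"
  proof -
    have "(\<integral>\<^sup>+\<omega>. ennreal (1 + (1 + 1 / eps) * (norm (W t \<omega>))\<^sup>2) \<partial>M)
        = (\<integral>\<^sup>+\<omega>. 1 + ennreal (1 + 1 / eps) * ennreal ((norm (W t \<omega>))\<^sup>2) \<partial>M)"
      using eps by (intro nn_integral_cong) (simp add: ennreal_mult)
    also have "\<dots> = 1 + ennreal (1 + 1 / eps) * (\<integral>\<^sup>+\<omega>. ennreal ((norm (W t \<omega>))\<^sup>2) \<partial>M)"
      by (subst nn_integral_add) (auto simp: nn_integral_cmult ps.emeasure_space_1)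
    also have "\<dots> \<le> 1 + ennreal (1 + 1 / eps) * ennreal Ct"
      using mom[of t] t by (intro add_left_mono mult_left_mono) auto
    also have "\<dots> = ennreal (1 + (1 + 1 / eps) * Ct)"
      using eps Ct by (simp add: ennreal_mult mult_nonneg_nonneg add_nonneg_nonneg)
    finally show ?thesis .
  qed
  show ?thesis
  proof (intro exI conjI allI)
    show "0 \<le> a" "a < 1" "0 \<le> bb" using a bb by auto
    fix x :: 'a
    have "\<forall>\<omega>\<in>space M. \<exists>Y. continuous_on {0..} Y \<and> (\<forall>s\<ge>0. Y s = x + integral {0..s} (\<lambda>r. b (Y r + W r \<omega>)))"
      using ode_exists[OF lipL Wc] by blast
    then obtain Yf where Yf: "\<And>\<omega>. \<omega> \<in> space M \<Longrightarrow> continuous_on {0..} (Yf \<omega>) \<and> (\<forall>s\<ge>0. Yf \<omega> s = x + integral {0..s} (\<lambda>r. b (Yf \<omega> r + W r \<omega>)))"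
      by metis
    define X where "X s \<omega> = Yf \<omega> s + W s \<omega>" for s \<omega>
    have sol: "sde_solution M W b x X"
      unfolding sde_solution_def
    proof (intro ballI conjI allI impI)
      fix \<omega> assume om: "\<omega> \<in> space M"
      show "continuous_on {0..} (\<lambda>t. X t \<omega>)"
        unfolding X_def using Yf[OF om] Wc[OF om] by (intro continuous_on_add) auto
      fix s :: real assume "0 \<le> s"
      thus "X s \<omega> = x + integral {0..s} (\<lambda>s. b (X s \<omega>)) + W s \<omega>"
        using Yf[OF om] by (simp add: X_def)
    qed
    have dist: "distributed M lborel (X t) (\<lambda>y. ennreal (S x y))" using S_density sol by blast
    have "(\<integral>\<^sup>+y. ennreal (S x y) * 1 \<partial>lborel) = (\<integral>\<^sup>+\<omega>. 1 \<partial>M)"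
      by (subst distributed_nn_integral[OF dist]) auto
    also have "\<dots> = 1" using ps.emeasure_space_1 by simp
    finally show "(\<integral>\<^sup>+y. ennreal (S x y) * 1 \<partial>lborel) \<le> 1" by simp
    have "(\<integral>\<^sup>+y. ennreal (S x y) * ennreal (1 + (norm y)\<^sup>2) \<partial>lborel) = (\<integral>\<^sup>+\<omega>. ennreal (1 + (norm (X t \<omega>))\<^sup>2) \<partial>M)"
      by (subst distributed_nn_integral[OF dist]) auto
    also have "\<dots> \<le> (\<integral>\<^sup>+\<omega>. ennreal (a * (1 + (norm x)\<^sup>2)) + (ennreal (1 + (1 + 1 / eps) * (norm (W t \<omega>))\<^sup>2)
                       + ennreal (1 + eps) * (\<integral>\<^sup>+r. Hj r \<omega> \<partial>lborel)) \<partial>M)"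
    proof (rule nn_integral_mono_AE, rule AE_I2)
      fix \<omega> assume om: "\<omega> \<in> space M"
      define J where "J = integral {0..t} (\<lambda>r. K1 + K2 * (norm (W r \<omega>))\<^sup>2)"
      have pb: "(norm (Yf \<omega> t))\<^sup>2 \<le> q * (norm x)\<^sup>2 + J"
        using path_bound[OF bL L0 dis R2 bc Wc[OF om], of "Yf \<omega>" x t] Yf[OF om] t
        unfolding q_def J_def K1_def K2_def by auto
      have hc: "continuous_on {0..t} (\<lambda>r. K1 + K2 * (norm (W (max 0 r) \<omega>))\<^sup>2)"
        by (intro continuous_intros continuous_on_compose2[OF Wc[OF om]]) auto
      have hi: "((\<lambda>r. K1 + K2 * (norm (W (max 0 r) \<omega>))\<^sup>2) has_integral J) {0..t}"
      proof -
        have "((\<lambda>r. K1 + K2 * (norm (W (max 0 r) \<omega>))\<^sup>2) has_integral integral {0..t} (\<lambda>r. K1 + K2 * (norm (W (max 0 r) \<omega>))\<^sup>2)) {0..t}"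
          by (rule integrable_integral, rule integrable_continuous_interval[OF hc])
        moreover have "integral {0..t} (\<lambda>r. K1 + K2 * (norm (W (max 0 r) \<omega>))\<^sup>2) = J"
          unfolding J_def by (rule integral_cong) auto
        ultimately show ?thesis by simp
      qed
      have J0: "0 \<le> J" using hi K by (intro has_integral_nonneg[OF hi]) auto
      have eJ: "ennreal J = (\<integral>\<^sup>+r. Hj r \<omega> \<partial>lborel)"
        unfolding Hj_def using nn_integral_has_integral_lebesgue'[OF _ hi] K by simp
      have "(norm (X t \<omega>))\<^sup>2 \<le> (1 + eps) * (norm (Yf \<omega> t))\<^sup>2 + (1 + 1 / eps) * (norm (W t \<omega>))\<^sup>2"
        unfolding X_def by (rule young[OF eps])
      also have "(1 + eps) * (norm (Yf \<omega> t))\<^sup>2 \<le> (1 + eps) * (q * (norm x)\<^sup>2 + J)"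
        using pb eps by (intro mult_left_mono) auto
      finally have "1 + (norm (X t \<omega>))\<^sup>2 \<le> a * (norm x)\<^sup>2 + (1 + (1 + 1 / eps) * (norm (W t \<omega>))\<^sup>2) + (1 + eps) * J"
        by (simp add: a_def algebra_simps)
      also have "\<dots> \<le> a * (1 + (norm x)\<^sup>2) + (1 + (1 + 1 / eps) * (norm (W t \<omega>))\<^sup>2) + (1 + eps) * J"
        using a by (simp add: algebra_simps)
      finally have "ennreal (1 + (norm (X t \<omega>))\<^sup>2) \<le> ennreal (a * (1 + (norm x)\<^sup>2) + (1 + (1 + 1 / eps) * (norm (W t \<omega>))\<^sup>2) + (1 + eps) * J)"
        by (rule ennreal_leI)
      also have "\<dots> = ennreal (a * (1 + (norm x)\<^sup>2)) + (ennreal (1 + (1 + 1 / eps) * (norm (W t \<omega>))\<^sup>2) + ennreal (1 + eps) * ennreal J)"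
        using a eps J0 by (simp add: ennreal_plus[symmetric] ennreal_mult[symmetric] add.assoc del: ennreal_plus)
      finally show "ennreal (1 + (norm (X t \<omega>))\<^sup>2) \<le> ennreal (a * (1 + (norm x)\<^sup>2)) + (ennreal (1 + (1 + 1 / eps) * (norm (W t \<omega>))\<^sup>2)
                       + ennreal (1 + eps) * (\<integral>\<^sup>+r. Hj r \<omega> \<partial>lborel))" unfolding eJ .
    qed
    also have "\<dots> = ennreal (a * (1 + (norm x)\<^sup>2)) + ((\<integral>\<^sup>+\<omega>. ennreal (1 + (1 + 1 / eps) * (norm (W t \<omega>))\<^sup>2) \<partial>M)
                       + ennreal (1 + eps) * (\<integral>\<^sup>+\<omega>. (\<integral>\<^sup>+r. Hj r \<omega> \<partial>lborel) \<partial>M))"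
      using Hjm2 by (simp add: nn_integral_add nn_integral_cmult ps.emeasure_space_1)
    also have "\<dots> \<le> ennreal (a * (1 + (norm x)\<^sup>2)) + (ennreal (1 + (1 + 1 / eps) * Ct) + ennreal (1 + eps) * ennreal (t * (K1 + K2 * Ct)))"
      using F1 F2 by (intro add_left_mono add_mono mult_left_mono) auto
    also have "ennreal (1 + (1 + 1 / eps) * Ct) + ennreal (1 + eps) * ennreal (t * (K1 + K2 * Ct)) = ennreal bb"
      using eps Ct K t by (simp add: bb_def ennreal_plus[symmetric] ennreal_mult[symmetric] del: ennreal_plus)
    finally show "(\<integral>\<^sup>+y. ennreal (S x y) * ennreal (1 + (norm y)\<^sup>2) \<partial>lborel) \<le> ennreal (a * (1 + (norm x)\<^sup>2)) + ennreal bb" .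
  qed
qed


theorem proposition24:
  fixes b :: "'a::euclidean_space \<Rightarrow> 'a"
    and M :: "'b measure" and W :: "real \<Rightarrow> 'b \<Rightarrow> 'a"
    and S :: "'a \<Rightarrow> 'a \<Rightarrow> real"
    and t R1 R2 :: real and x0 :: 'a and u :: "nat \<Rightarrow> real"
  assumes lip: "\<exists>C. C-lipschitz_on UNIV b"
    and dissip: "\<forall>x. inner (b x) x \<le> R1 - R2 * (norm x)\<^sup>2" and R2: "R2 > 0"
    and BM: "brownian_motion M W"
    and t: "t > 0"
    and S_meas: "(\<lambda>(x, y). S x y) \<in> borel_measurable borel"
    and S_nonneg: "\<forall>x y. S x y \<ge> 0"
    and S_density: "\<forall>x X. sde_solution M W b x X \<longrightarrow>
                      distributed M lborel (X t) (\<lambda>y. ennreal (S x y))"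
    and u: "filterlim u at_top sequentially"
  shows "\<exists>lam A B. 0 \<le> lam \<and> lam < 1 \<and> A \<ge> 0 \<and> B \<ge> 0 \<and>
           (\<forall>f :: 'a \<Rightarrow> real. f \<in> borel_measurable lborel \<and> L12_norm f < \<infinity> \<longrightarrow>
              (\<forall>m n. m \<ge> 1 \<and> n \<ge> 1 \<longrightarrow>
                 L12_norm ((open_op S x0 u n ^^ m) f)
                   \<le> ennreal (A * lam ^ m) * L12_norm f + ennreal B * L1_norm f))"
  proof -
  obtain a bb where ab: "0 \<le> a" "a < 1" "0 \<le> bb"
    and k: "\<And>x. (\<integral>\<^sup>+y. ennreal (S x y) * 1 \<partial>lborel) \<le> 1 \<and>
         (\<integral>\<^sup>+y. ennreal (S x y) * ennreal (1 + (norm y)\<^sup>2) \<partial>lborel) \<le> ennreal (a * (1 + (norm x)\<^sup>2)) + ennreal bb"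
    using kernel_bounds[OF lip dissip R2 BM t S_density] by blast
  show ?thesis
    by (rule operator_part[OF S_meas S_nonneg _ _ ab]) (use k in auto)
qed

end
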